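(* Let $N,M$ be positive integers with $M>N$ and $N$ even, $t$ a complex parameter, $w(x)=e^{-\frac{M}{2}x}x^{\frac{M-N-1}{2}}(t-x)^{-\frac12}$. Every polynomial $P$ can be written uniquely as $P(x)=\frac{d}{dx}\big(q(x)x(t-x)w(x)\big)w^{-1}(x)+R(x)$ with $q$ a polynomial and $\deg R\le1$; let $f$ be the linear map $P\mapsto R$. Let $\pi_{N,1}$ and $\pi_{N+1,1}$ be monic skew orthogonal polynomials of degrees $N$ and $N+1$ with respect to $w$, and let $\varrho_\pi$ be the restriction of $f$ to the span of $\pi_{N+1,1}$ and $\pi_{N,1}$. Then $\varrho_\pi$ is invertible.
   Context: The skew product is $\langle f,g\rangle_1=\int_0^\infty\int_0^\infty\epsilon(x-y)f(x)g(y)w(x)w(y)\,dx\,dy$ with $\epsilon(x)=\frac12\mathrm{sgn}(x)$ (branch cut of $(t-x)^{-1/2}$ on $\arg(t-x)=\pi$; contour deformed near $t$ if $t\in(0,\infty)$). A monic skew orthogonal polynomial $\pi_{j,1}$ of degree $j$ is a monic polynomial of degree $j$ such that, writing $j=2m$ or $2m+1$, $\langle\pi_{j,1},y^i\rangle_1=0$ for $i=0,\ldots,2m-1$. Invertible means a linear bijection onto the space of polynomials of degree at most $1$. *)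

theory Defs
  imports "HOL-Analysis.Analysis" "HOL-Computational_Algebra.Polynomial"
begin

text \<open>Weight w(x) = exp(-M x/2) x^((M-N-1)/2) (t-x)^(-1/2) on x > 0.
  The complex power uses the principal branch of Ln (Arg in (-pi,pi]),
  i.e. the branch cut of (t-x)^(-1/2) lies on arg(t-x) = pi.\<close>
definition weight :: "nat \<Rightarrow> nat \<Rightarrow> complex \<Rightarrow> real \<Rightarrow> complex" where
  "weight N M t x =
     complex_of_real (exp (- (real M / 2) * x) * x powr ((real M - real N - 1) / 2))
     * (t - complex_of_real x) powr (- (1/2))"

definition eps :: "real \<Rightarrow> real" where
  "eps x = sgn x / 2"

definition skew1 :: "nat \<Rightarrow> nat \<Rightarrow> complex \<Rightarrow> complex poly \<Rightarrow> complex poly \<Rightarrow> complex" where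
  "skew1 N M t f g =
     (LINT x:{0<..}|lborel. LINT y:{0<..}|lborel.
        complex_of_real (eps (x - y)) * poly f (complex_of_real x) * poly g (complex_of_real y)
        * weight N M t x * weight N M t y)"

text \<open>Monic skew orthogonal polynomial of degree j (j = 2m or 2m+1):
  <pi, y^i>_1 = 0 for i = 0..2m-1.\<close>
definition skew_orth :: "nat \<Rightarrow> nat \<Rightarrow> complex \<Rightarrow> nat \<Rightarrow> complex poly \<Rightarrow> bool" where
  "skew_orth N M t j p \<longleftrightarrow>
     degree p = j \<and> lead_coeff p = 1 \<and>
     (\<forall>i < 2 * (j div 2). skew1 N M t p (monom 1 i) = 0)"

text \<open>The operator q \<mapsto> (d/dx (q(x) x (t-x) w(x))) w(x)^(-1), written out as a
  polynomial using w'/w = -M/2 + ((M-N-1)/2)/x + 1/(2(t-x)):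
  (q x (t-x))' + q (-(M/2) x (t-x) + ((M-N-1)/2) (t-x) + x/2).\<close>
definition Dop :: "nat \<Rightarrow> nat \<Rightarrow> complex \<Rightarrow> complex poly \<Rightarrow> complex poly" where
  "Dop N M t q =
     pderiv (q * [:0, 1:] * [:t, -1:])
     + q * (smult (- (of_nat M / 2)) ([:0, 1:] * [:t, -1:])
            + smult ((of_nat M - of_nat N - 1) / 2) [:t, -1:]
            + smult (1/2) [:0, 1:])"

definition fmap :: "nat \<Rightarrow> nat \<Rightarrow> complex \<Rightarrow> complex poly \<Rightarrow> complex poly" where
  "fmap N M t P = (THE R. degree R \<le> 1 \<and> (\<exists>q. P = Dop N M t q + R))"

end

theory Submission
  imports Defs "HOL-Complex_Analysis.Complex_Analysis"
begin

definition DA :: "nat \<Rightarrow> nat \<Rightarrow> complex \<Rightarrow> complex poly" where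
 "DA N M t = [: (of_nat M - of_nat N - 1) / 2 * t + t,
     - (of_nat M / 2) * t - (of_nat M - of_nat N - 1) / 2 + 1/2 - 2, of_nat M / 2 :]"
definition DB :: "complex \<Rightarrow> complex poly" where
 "DB t = [:0, t, -1:]"

lemma DA_eq: "[:t, -2:] + (smult (- (of_nat M / 2)) (DB t)
            + smult ((of_nat M - of_nat N - 1) / 2) [:t, -1:]
            + smult (1/2) [:0, 1:]) = DA N M t"
  unfolding DA_def DB_def
  by (simp add: field_simps)

lemma Dop_alt: "Dop N M t q = pderiv q * DB t + q * DA N M t"
proof -
  have 1: "q * [:0, 1:] * [:t, -1:] = q * DB t" unfolding DB_def by (simp add: mult.assoc)
  have 2: "[:0, 1:] * [:t, -1:] = DB t" unfolding DB_def by simp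
  have 3: "pderiv (DB t) = [:t, -2:]" unfolding DB_def by (simp add: pderiv_pCons)
  show ?thesis unfolding Dop_def 1 2 pderiv_mult 3
    unfolding DA_def DB_def poly_eq_poly_eq_iff[symmetric] fun_eq_iff
    by (simp add: field_simps)
qed

lemma Dop_add: "Dop N M t (p + q) = Dop N M t p + Dop N M t q"
  unfolding Dop_alt by (simp add: pderiv_add algebra_simps)
lemma Dop_smult: "Dop N M t (smult c p) = smult c (Dop N M t p)"
  unfolding Dop_alt by (simp add: pderiv_smult algebra_simps smult_add_right)
lemma Dop_0: "Dop N M t 0 = 0"
  unfolding Dop_alt by simp
lemma Dop_diff: "Dop N M t (p - q) = Dop N M t p - Dop N M t q"
  using Dop_add[of N M t "p - q" q] by simp

lemma Dop_degree:
  assumes "M > 0" "q \<noteq> 0"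
  shows "degree (Dop N M t q) = degree q + 2 \<and> coeff (Dop N M t q) (degree q + 2) = of_nat M / 2 * lead_coeff q"
proof -
  have c2: "coeff (DA N M t) 2 = of_nat M / 2" by (simp add: DA_def numeral_2_eq_2)
  have "(of_nat M::complex) / 2 \<noteq> 0" using assms(1) by simp
  hence "coeff (DA N M t) 2 \<noteq> 0" by (metis c2)
  hence "2 \<le> degree (DA N M t)" by (rule le_degree)
  moreover have "degree (DA N M t) \<le> 2" by (simp add: DA_def)
  ultimately have dA: "degree (DA N M t) = 2" by simp
  have lA: "lead_coeff (DA N M t) = of_nat M / 2" using dA c2 by simp
  have A0: "DA N M t \<noteq> 0" using dA by auto
  have d1: "degree (q * DA N M t) = degree q + 2"
    using assms(2) A0 dA by (simp add: degree_mult_eq)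
  have d2: "degree (pderiv q * DB t) < degree q + 2"
  proof (cases "degree q")
    case 0
    then have "pderiv q = 0" by (simp add: pderiv_eq_0_iff)
    then show ?thesis by simp
  next
    case (Suc n)
    have "degree (pderiv q * DB t) \<le> degree (pderiv q) + degree (DB t)"
      by (rule degree_mult_le)
    also have "\<dots> \<le> degree (pderiv q) + 2" by (simp add: DB_def)
    also have "\<dots> < degree q + 2" using Suc by (simp add: degree_pderiv)
    finally show ?thesis .
  qed
  have deg: "degree (Dop N M t q) = degree q + 2"
    unfolding Dop_alt using d1 d2 by (simp add: degree_add_eq_right)
  have "coeff (Dop N M t q) (degree q + 2) = coeff (q * DA N M t) (degree q + 2)"
    unfolding Dop_alt using d2 by (simp add: coeff_eq_0)
  also have "\<dots> = lead_coeff q * lead_coeff (DA N M t)"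
    using d1 lead_coeff_mult[of q "DA N M t"] by simp
  finally show ?thesis using deg lA by simp
qed

lemma degree_lt_if_coeff0:
  assumes "degree p \<le> n" "coeff p n = 0" "n > 0"
  shows "degree p < n"
proof (rule ccontr)
  assume "\<not> degree p < n"
  hence "degree p = n" using assms by simp
  hence "p = 0" using assms(2) by (metis leading_coeff_0_iff)
  thus False using \<open>degree p = n\<close> assms(3) by simp
qed

lemma decomp_ex:
  assumes "M > 0"
  shows "\<exists>q R. degree R \<le> 1 \<and> P = Dop N M t q + R"
proof (induction "degree P" arbitrary: P rule: less_induct)
  case less
  show ?case
  proof (cases "degree P \<le> 1")
    case True then show ?thesis by (intro exI[of _ 0] exI[of _ P]) (simp add: Dop_0)
  next
    case False
    define d where "d = degree P - 2"
    have dP: "degree P = d + 2" using False d_def by simp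
    define c where "c = lead_coeff P / (of_nat M / 2)"
    have Mne: "(of_nat M::complex) / 2 \<noteq> 0" using assms by simp
    have P0: "lead_coeff P \<noteq> 0" using False by auto
    hence c0: "c \<noteq> 0" using Mne by (simp add: c_def)
    define q0 where "q0 = monom c d"
    have q0: "q0 \<noteq> 0" "degree q0 = d" "lead_coeff q0 = c" using c0 by (simp_all add: q0_def degree_monom_eq)
    from Dop_degree[OF assms q0(1), of N t]
    have D: "degree (Dop N M t q0) = degree P" "coeff (Dop N M t q0) (degree P) = lead_coeff P"
      using q0 dP Mne by (simp_all add: c_def)
    define P' where "P' = P - Dop N M t q0"
    have "degree P' \<le> degree P" unfolding P'_def using D by (metis degree_diff_le order_refl)
    moreover have "coeff P' (degree P) = 0" unfolding P'_def using D by simp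
    ultimately have "degree P' < degree P" using dP by (intro degree_lt_if_coeff0) auto
    from less(1)[OF this] obtain q R where "degree R \<le> 1" "P' = Dop N M t q + R" by blast
    hence "P = Dop N M t (q0 + q) + R" unfolding P'_def Dop_add by (simp add: algebra_simps)
    with \<open>degree R \<le> 1\<close> show ?thesis by blast
  qed
qed

lemma decomp_uniq:
  assumes "M > 0" "degree R1 \<le> 1" "degree R2 \<le> 1" "Dop N M t q1 + R1 = Dop N M t q2 + R2"
  shows "R1 = R2"
proof (cases "q1 = q2")
  case True then show ?thesis using assms(4) by simp
next
  case False
  hence ne: "q1 - q2 \<noteq> 0" by simp
  have "Dop N M t (q1 - q2) = R2 - R1" using assms(4) unfolding Dop_diff by (simp add: algebra_simps)
  moreover have "degree (R2 - R1) \<le> 1" using assms(2,3) by (meson degree_diff_le)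
  ultimately have "degree (Dop N M t (q1 - q2)) \<le> 1" by simp
  with Dop_degree[OF assms(1) ne] show ?thesis by simp
qed

lemma fmap_eq:
  assumes "M > 0" "degree R \<le> 1" "P = Dop N M t q + R"
  shows "fmap N M t P = R"
  unfolding fmap_def
proof (rule the_equality)
  show "degree R \<le> 1 \<and> (\<exists>q. P = Dop N M t q + R)" using assms by blast
next
  fix R' assume "degree R' \<le> 1 \<and> (\<exists>q. P = Dop N M t q + R')"
  then obtain q' where "degree R' \<le> 1" "P = Dop N M t q' + R'" by blast
  thus "R' = R" using decomp_uniq[OF assms(1) _ assms(2), of R' N t q' q] assms(3) by simp
qed

lemma fmap_spec:
  assumes "M > 0"
  shows "\<exists>q. P = Dop N M t q + fmap N M t P \<and> degree (fmap N M t P) \<le> 1"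
proof -
  obtain q R where "degree R \<le> 1" "P = Dop N M t q + R" using decomp_ex[OF assms] by blast
  thus ?thesis using fmap_eq[OF assms] by metis
qed

lemma deg1_pCons: "degree p \<le> 1 \<Longrightarrow> p = [:coeff p 0, coeff p 1:]"
  by (auto simp: poly_eq_iff coeff_pCons coeff_eq_0 split: nat.split)

lemma powr_real_abs: "(x::real) powr a = \<bar>x\<bar> powr a"
proof -
  have "ln x = ln \<bar>x\<bar>" by (cases "x \<ge> 0") (simp, metis abs_of_neg not_le ln_minus)
  thus ?thesis by (simp add: powr_def)
qed

lemma polyexp_bound:
  fixes c :: real
  assumes "c > 0"
  shows "\<exists>D>0. \<forall>x\<ge>0. (1+x)^k \<le> D * exp(c*x)"
proof (cases "k = 0")
  case True then show ?thesis using assms by (intro exI[of _ "1::real"]) (auto simp: zero_le_mult_iff)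
next
  case False
  define L where "L = max 1 (real k / c)"
  have L1: "L \<ge> 1" and Lk: "L * (c / real k) \<ge> 1" using False assms
    by (auto simp: L_def field_simps max_def)
  show ?thesis
  proof (intro exI[of _ "L^k"] conjI allI impI)
    show "L^k > 0" using L1 by simp
    fix x :: real assume x: "x \<ge> 0"
    have "1 * x \<le> L * (c / real k) * x" using mult_right_mono[OF Lk x] .
    hence "x \<le> L * (c / real k) * x" by simp
    hence "1 + x \<le> L * (1 + (c / real k) * x)"
      using L1 by (simp add: algebra_simps)
    hence "(1+x)^k \<le> (L * (1 + (c / real k) * x))^k" using x by (intro power_mono) auto
    also have "\<dots> = L^k * (1 + (c / real k) * x)^k" by (simp add: power_mult_distrib)
    also have "\<dots> \<le> L^k * (exp ((c / real k) * x))^k"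
      using L1 x assms by (intro mult_left_mono power_mono) (auto simp: exp_ge_add_one_self)
    also have "(exp ((c / real k) * x))^k = exp (c * x)"
      using False by (simp add: exp_of_nat_mult[symmetric])
    finally show "(1+x)^k \<le> L^k * exp(c*x)" .
  qed
qed

lemma polyexp_decay:
  fixes c :: real
  assumes "c > 0"
  shows "\<exists>D>0. \<forall>x\<ge>0. (1+x)^k * exp(-c*x) \<le> D * exp(-(c/2)*x)"
proof -
  obtain D where D: "D > 0" "\<forall>x\<ge>0. (1+x)^k \<le> D * exp((c/2)*x)"
    using polyexp_bound[of "c/2" k] assms by auto
  show ?thesis
  proof (intro exI[of _ D] conjI allI impI)
    fix x :: real assume "x \<ge> 0"
    hence "(1+x)^k * exp(-c*x) \<le> D * exp((c/2)*x) * exp(-c*x)"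
      using D by (intro mult_right_mono) auto
    also have "\<dots> = D * exp(-(c/2)*x)" by (simp add: mult.assoc exp_add[symmetric])
    finally show "(1+x)^k * exp(-c*x) \<le> D * exp(-(c/2)*x)" .
  qed (use D in auto)
qed

lemma poly_norm_bound:
  fixes p :: "complex poly" and x :: real
  assumes "x \<ge> 0"
  shows "norm (poly p (of_real x)) \<le> (\<Sum>i\<le>degree p. norm (coeff p i)) * (1+x)^(degree p)"
proof -
  have "norm (poly p (of_real x)) = norm (\<Sum>i\<le>degree p. coeff p i * of_real x ^ i)"
    by (simp add: poly_altdef)
  also have "\<dots> \<le> (\<Sum>i\<le>degree p. norm (coeff p i * of_real x ^ i))" by (rule norm_sum)
  also have "\<dots> \<le> (\<Sum>i\<le>degree p. norm (coeff p i) * (1+x)^(degree p))"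
  proof (rule sum_mono)
    fix i assume "i \<in> {..degree p}"
    hence i: "i \<le> degree p" by simp
    have "x^i \<le> (1+x)^i" using assms by (intro power_mono) auto
    also have "\<dots> \<le> (1+x)^(degree p)" using assms i by (intro power_increasing) auto
    finally have "x^i \<le> (1+x)^(degree p)" .
    thus "norm (coeff p i * of_real x ^ i) \<le> norm (coeff p i) * (1+x)^(degree p)"
      using assms by (simp add: norm_mult norm_power mult_left_mono)
  qed
  also have "\<dots> = (\<Sum>i\<le>degree p. norm (coeff p i)) * (1+x)^(degree p)" by (simp add: sum_distrib_right)
  finally show ?thesis .
qed

lemma HK_to_lborel:
  fixes g :: "real \<Rightarrow> real"
  assumes "g integrable_on S" "\<And>x. x \<in> S \<Longrightarrow> 0 \<le> g x" "S \<in> sets borel" "g \<in> borel_measurable borel"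
  shows "set_integrable lborel S g"
proof -
  have "g absolutely_integrable_on S" by (rule nonnegative_absolutely_integrable_1[OF assms(1,2)])
  hence "integrable lebesgue (\<lambda>x. indicator S x *\<^sub>R g x)" by (simp add: set_integrable_def)
  moreover have "(\<lambda>x. indicator S x *\<^sub>R g x) \<in> borel_measurable lborel" using assms(3,4) by measurable
  ultimately show ?thesis unfolding set_integrable_def using integrable_completion by blast
qed

lemma sing_integrable: "(\<lambda>x::real. (x - r) powr (-1/2)) integrable_on {r-1..r+1}"
proof -
  have i1: "(\<lambda>x::real. x powr (-1/2)) integrable_on {0..1}" by (rule integrable_on_powr_from_0) auto
  have "(\<lambda>x::real. (-x) powr (-1/2)) integrable_on {-1..-0}"
    using Henstock_Kurzweil_Integration.integrable_reflect_real[THEN iffD2, OF i1] by simp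
  moreover have "(\<lambda>x::real. (-x) powr (-1/2)) = (\<lambda>x. x powr (-1/2))"
    by (rule ext) (subst powr_real_abs, subst (2) powr_real_abs, simp)
  ultimately have i2: "(\<lambda>x::real. x powr (-1/2)) integrable_on {-1..0}" by simp
  have i3: "(\<lambda>x::real. x powr (-1/2)) integrable_on {-1..1}"
    by (rule Henstock_Kurzweil_Integration.integrable_combine[OF _ _ i2 i1]) auto
  then obtain I where "((\<lambda>x::real. x powr (-1/2)) has_integral I) (cbox (-1) 1)"
    by (auto simp: integrable_on_def)
  from has_integral_affinity'[OF this, of 1 "-r"]
  have "((\<lambda>x::real. (x - r) powr (-1/2)) has_integral I) (cbox (r - 1) (r + 1))"
    by (simp add: algebra_simps)
  thus ?thesis by (auto simp: integrable_on_def)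
qed

lemma sb_integrable:
  fixes c r :: real
  assumes "c > 0"
  shows "set_integrable lborel {0<..} (\<lambda>x. (1+x)^k * exp(-c*x) * (1 + (x - r) powr (-1/2)))"
proof -
  obtain D where D: "D > 0" "\<forall>x\<ge>0. (1+x)^k * exp(-c*x) \<le> D * exp(-(c/2)*x)"
    using polyexp_decay[OF assms, of k] by auto
  have ex: "set_integrable lborel {0<..} (\<lambda>x. exp(-(c/2)*x))"
  proof -
    have "(\<lambda>x. exp(-(c/2)*x)) integrable_on {0..}"
      using integrable_on_exp_minus_to_infinity[of "c/2" 0] assms by simp
    hence "set_integrable lborel {0..} (\<lambda>x. exp(-(c/2)*x))"
      by (rule HK_to_lborel) auto
    thus ?thesis by (rule set_integrable_subset) auto
  qed
  have sg: "set_integrable lborel {r-1..r+1} (\<lambda>x. (x - r) powr (-1/2))"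
    by (rule HK_to_lborel[OF sing_integrable]) auto
  define dom where "dom = (\<lambda>x. 2 * D * exp(-(c/2)*x) + D * (indicator {r-1..r+1} x * (x - r) powr (-1/2)))"
  have di: "set_integrable lborel {0<..} dom"
  proof -
    have sg': "integrable lborel (\<lambda>x. indicator {r-1..r+1} x *\<^sub>R (x - r) powr (-1/2))"
      using sg unfolding set_integrable_def .
    have "integrable lborel (\<lambda>x. indicator {0<..} x *\<^sub>R (indicator {r-1..r+1} x *\<^sub>R (x - r) powr (-1/2)))"
      by (rule integrable_mult_indicator[OF _ sg']) simp
    hence "set_integrable lborel {0<..} (\<lambda>x. indicator {r-1..r+1} x * (x - r) powr (-1/2))"
      unfolding set_integrable_def by simp
    thus ?thesis unfolding dom_def using ex
      by (intro set_integral_add(1) set_integrable_mult_right) auto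
  qed
  show ?thesis
  proof (rule set_integrable_bound[OF di])
    show "set_borel_measurable lborel {0<..} (\<lambda>x. (1+x)^k * exp(-c*x) * (1 + (x - r) powr (-1/2)))"
      unfolding set_borel_measurable_def by measurable
    show "AE x in lborel. x \<in> {0<..} \<longrightarrow> norm ((1+x)^k * exp(-c*x) * (1 + (x - r) powr (-1/2))) \<le> norm (dom x)"
    proof (rule AE_I2, intro impI)
      fix x :: real assume "x \<in> {0<..}"
      hence x: "x > 0" by simp
      have P: "0 \<le> (x - r) powr (-1/2)" by simp
      have A: "(1+x)^k * exp(-c*x) \<le> D * exp(-(c/2)*x)" using D x by simp
      have A0: "0 \<le> (1+x)^k * exp(-c*x)" using x by simp
      have E: "exp(-(c/2)*x) \<le> 1" using x assms by simp
      have B: "(1+x)^k * exp(-c*x) * (x - r) powr (-1/2) \<le> D * exp(-(c/2)*x) + D * (indicator {r-1..r+1} x * (x - r) powr (-1/2))"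
      proof (cases "x \<in> {r-1..r+1}")
        case True
        have "(1+x)^k * exp(-c*x) * (x - r) powr (-1/2) \<le> D * exp(-(c/2)*x) * (x - r) powr (-1/2)"
          using A P by (rule mult_right_mono)
        also have "D * exp(-(c/2)*x) \<le> D" using E D(1) by (simp add: mult_left_le)
        hence "D * exp(-(c/2)*x) * (x - r) powr (-1/2) \<le> D * (x - r) powr (-1/2)"
          using P by (rule mult_right_mono)
        finally have "(1+x)^k * exp(-c*x) * (x - r) powr (-1/2) \<le> D * (x - r) powr (-1/2)" .
        moreover have "0 \<le> D * exp(-(c/2)*x)" using D(1) by simp
        ultimately show ?thesis using True by simp
      next
        case False
        hence "\<bar>x - r\<bar> \<ge> 1" by auto
        hence "\<bar>x - r\<bar> powr (-1/2) \<le> 1 powr (-1/2)" by (intro powr_mono2') auto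
        hence "\<bar>x - r\<bar> powr (-1/2) \<le> 1" by simp
        hence "(x - r) powr (-1/2) \<le> 1" by (subst powr_real_abs)
        hence "(1+x)^k * exp(-c*x) * (x - r) powr (-1/2) \<le> (1+x)^k * exp(-c*x)"
          using A0 by (simp add: mult_left_le)
        thus ?thesis using False A by simp
      qed
      have "norm ((1+x)^k * exp(-c*x) * (1 + (x - r) powr (-1/2))) = (1+x)^k * exp(-c*x) + (1+x)^k * exp(-c*x) * (x - r) powr (-1/2)"
        using x P by (simp add: algebra_simps)
      also have "\<dots> \<le> dom x" using A B D(1) E unfolding dom_def by simp
      also have "\<dots> \<le> norm (dom x)" by simp
      finally show "norm ((1+x)^k * exp(-c*x) * (1 + (x - r) powr (-1/2))) \<le> norm (dom x)" .
    qed
  qed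
qed

definition aa :: "nat \<Rightarrow> nat \<Rightarrow> real" where "aa N M = (real M - real N - 1) / 2"

lemma norm_W:
  assumes "x \<ge> 0"
  shows "norm (weight N M t x) = exp (- (real M / 2) * x) * x powr aa N M * norm (t - of_real x) powr (-1/2)"
proof -
  have "norm ((t - complex_of_real x) powr (- (1/2))) = norm (t - of_real x) powr (-1/2)"
    by (subst norm_powr_real_powr') auto
  thus ?thesis unfolding weight_def aa_def using assms by (simp add: norm_mult)
qed

lemma W_bound:
  assumes "M > N" "x > 0" "x \<noteq> Re t"
  shows "norm (weight N M t x) \<le> (1+x)^(M-N) * exp (- (real M / 2) * x) * (1 + (x - Re t) powr (-1/2))"
proof -
  have a0: "aa N M \<ge> 0" using assms(1) unfolding aa_def by simp
  have a1: "aa N M \<le> real (M - N)" using assms(1) unfolding aa_def by simp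
  have "x powr aa N M \<le> (1+x) powr aa N M" using a0 assms by (intro powr_mono2) auto
  also have "\<dots> \<le> (1+x) powr real (M - N)" using a1 assms by (intro powr_mono) auto
  also have "\<dots> = (1+x)^(M-N)" using assms by (intro powr_realpow) auto
  finally have X: "x powr aa N M \<le> (1+x)^(M-N)" .
  have "\<bar>x - Re t\<bar> > 0" using assms by simp
  moreover have "\<bar>x - Re t\<bar> \<le> norm (t - of_real x)"
    using abs_Re_le_cmod[of "t - of_real x"] by simp
  ultimately have "norm (t - of_real x) powr (-1/2) \<le> \<bar>x - Re t\<bar> powr (-1/2)"
    by (intro powr_mono2') auto
  also have "\<dots> = (x - Re t) powr (-1/2)" by (rule powr_real_abs[symmetric])
  finally have T: "norm (t - of_real x) powr (-1/2) \<le> 1 + (x - Re t) powr (-1/2)" by simp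
  have "norm (weight N M t x) = exp (- (real M / 2) * x) * (x powr aa N M * norm (t - of_real x) powr (-1/2))"
    using norm_W[of x] assms by simp
  also have "\<dots> \<le> exp (- (real M / 2) * x) * ((1+x)^(M-N) * (1 + (x - Re t) powr (-1/2)))"
    using X T assms by (intro mult_left_mono mult_mono) auto
  finally show ?thesis by (simp add: algebra_simps)
qed

lemma W_sq:
  assumes "M > N" "x > 0" "of_real x \<noteq> t"
  shows "(t - of_real x) * (weight N M t x * weight N M t x) = of_real (exp (- real M * x) * x ^ (M - N - 1))"
proof -
  define z where "z = t - of_real x"
  have z0: "z \<noteq> 0" using assms z_def by auto
  have "z powr (- (1/2)) * z powr (- (1/2)) = z powr (-1)"
    by (simp add: powr_add[symmetric])
  also have "\<dots> = inverse z" by (simp add: powr_minus)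
  finally have Z: "z * (z powr (- (1/2)) * z powr (- (1/2))) = 1" using z0 by simp
  have r: "(real M - real N - 1)/2 + (real M - real N - 1)/2 = real (M - N - 1)"
    using assms(1) by (simp add: of_nat_diff algebra_simps)
  have "x powr ((real M - real N - 1) / 2) * x powr ((real M - real N - 1) / 2) = x powr ((real M - real N - 1)/2 + (real M - real N - 1)/2)"
    by (rule powr_add[symmetric])
  also have "\<dots> = x powr (real (M - N - 1))" by (simp only: r)
  also have "\<dots> = x ^ (M - N - 1)" using assms(2) by (rule powr_realpow)
  finally have X: "x powr ((real M - real N - 1) / 2) * x powr ((real M - real N - 1) / 2) = x ^ (M - N - 1)" .
  have E: "exp (- (real M / 2) * x) * exp (- (real M / 2) * x) = exp (- real M * x)"
    by (simp add: exp_add[symmetric])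
  have "(t - of_real x) * (weight N M t x * weight N M t x)
      = of_real (exp (- (real M / 2) * x) * exp (- (real M / 2) * x) * (x powr ((real M - real N - 1) / 2) * x powr ((real M - real N - 1) / 2)))
        * (z * (z powr (- (1/2)) * z powr (- (1/2))))"
    unfolding weight_def z_def by (simp add: algebra_simps)
  also have "\<dots> = of_real (exp (- real M * x) * x ^ (M - N - 1))" using Z X E by simp
  finally show ?thesis .
qed

lemma W_meas: "(\<lambda>x. weight N M t x) \<in> borel_measurable borel"
proof -
  have "(\<lambda>x::real. (t - complex_of_real x) powr (- (1/2))) \<in> borel_measurable borel"
    unfolding powr_def by measurable
  thus ?thesis unfolding weight_def by measurable
qed

lemma V_deriv:
  fixes t :: complex and x :: real
  assumes "of_real x \<noteq> t"
  shows "((\<lambda>y. (t - of_real y) powr (- (1/2))) has_vector_derivative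
           ((t - of_real x) powr (- (1/2)) / (2 * (t - of_real x)))) (at x)"
proof (cases "t - of_real x \<in> \<real>\<^sub>\<le>\<^sub>0")
  case False
  have "((\<lambda>y. complex_of_real y) has_vector_derivative of_real 1) (at x)"
    by (rule has_vector_derivative_of_real[OF DERIV_ident])
  hence f: "((\<lambda>y. t - complex_of_real y) has_vector_derivative (0 - 1)) (at x)"
    by (intro has_vector_derivative_diff) auto
  have g: "((\<lambda>z. z powr (- (1/2))) has_field_derivative (- (1/2)) * (t - of_real x) powr (- (1/2) - 1)) (at (t - of_real x))"
    by (rule has_field_derivative_powr) (use False in auto)
  from field_vector_diff_chain_at[OF f g]
  have D: "((\<lambda>y. (t - of_real y) powr (- (1/2))) has_vector_derivative ((0 - 1) * ((- (1/2)) * (t - of_real x) powr (- (1/2) - 1)))) (at x)"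
    by (simp add: o_def)
  have z0: "t - of_real x \<noteq> 0" using assms by auto
  have "(t - of_real x) powr (- (1/2) - 1) = (t - of_real x) powr (- (1/2)) / (t - of_real x)"
    by (simp only: powr_diff powr_to_1)
  moreover have gen: "\<And>A B z::complex. A = B / z \<Longrightarrow> z \<noteq> 0 \<Longrightarrow> (0 - 1) * ((- (1/2)) * A) = B / (2 * z)"
    by (simp add: field_simps)
  ultimately have eqd: "(0 - 1) * ((- (1/2)) * (t - of_real x) powr (- (1/2) - 1)) = (t - of_real x) powr (- (1/2)) / (2 * (t - of_real x))"
    using z0 by blast
  show ?thesis using D unfolding eqd .
next
  case True
  define r where "r = Re t"
  have It: "Im t = 0" using True by (simp add: complex_nonpos_Reals_iff)
  have tr: "t = of_real r" using It r_def by (simp add: complex_eq_iff)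
  have xr: "r < x" using True assms tr by (auto simp: complex_nonpos_Reals_iff)
  define \<kappa> where "\<kappa> = exp (- (1/2) * (\<i> * of_real pi))"
  have eq: "(t - of_real y) powr (- (1/2)) = of_real ((y - r) powr (-1/2)) * \<kappa>" if y: "y \<in> {r<..}" for y
  proof -
    have yr: "y - r > 0" using y by simp
    have tm: "t - of_real y = - of_real (y - r)" using tr by simp
    have "Ln (- complex_of_real (y - r)) = Ln (of_real (y - r)) + \<i> * pi"
      using yr by (subst Ln_minus) auto
    also have "Ln (complex_of_real (y - r)) = of_real (ln (y - r))" using yr by (rule Ln_of_real)
    finally have L: "Ln (- complex_of_real (y - r)) = of_real (ln (y - r)) + \<i> * pi" .
    have "(t - of_real y) powr (- (1/2)) = exp (- (1/2) * Ln (- complex_of_real (y - r)))"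
      using yr by (simp add: tm powr_def)
    also have "\<dots> = exp (of_real (- (1/2) * ln (y - r))) * \<kappa>"
      unfolding L \<kappa>_def by (simp add: exp_add[symmetric] algebra_simps)
    also have "exp (complex_of_real (- (1/2) * ln (y - r))) = of_real ((y - r) powr (-1/2))"
      using yr by (simp add: powr_def flip: exp_of_real)
    finally show ?thesis .
  qed
  have d1: "((\<lambda>y. (y - r) powr (-1/2)) has_real_derivative (-1/2) * (x - r) powr (-1/2 - of_nat 1) * 1) (at x)"
    by (rule DERIV_fun_powr) (use xr in \<open>auto intro!: derivative_eq_intros\<close>)
  have d2: "((\<lambda>y. of_real ((y - r) powr (-1/2)) * \<kappa>) has_vector_derivative
            (of_real ((x - r) powr (-1/2)) * 0 + of_real ((-1/2) * (x - r) powr (-1/2 - of_nat 1) * 1) * \<kappa>)) (at x)"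
    by (intro has_vector_derivative_mult has_vector_derivative_of_real[OF d1] has_vector_derivative_const)
  have e: "of_real ((x - r) powr (-1/2)) * 0 + of_real ((-1/2) * (x - r) powr (-1/2 - of_nat 1) * 1) * \<kappa>
     = of_real ((-1/2) * (x - r) powr (-1/2 - 1)) * \<kappa>" by simp
  have d2': "((\<lambda>y. of_real ((y - r) powr (-1/2)) * \<kappa>) has_vector_derivative
            (of_real ((-1/2) * (x - r) powr (-1/2 - 1)) * \<kappa>)) (at x)"
    using d2 unfolding e .
  have d3: "((\<lambda>y. (t - of_real y) powr (- (1/2))) has_vector_derivative
            (of_real ((-1/2) * (x - r) powr (-1/2 - 1)) * \<kappa>)) (at x)"
  proof (rule has_vector_derivative_transform_within_open[OF d2' open_greaterThan])
    show "x \<in> {r<..}" using xr by simp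
    fix y :: real assume "y \<in> {r<..}"
    thus "of_real ((y - r) powr (-1/2)) * \<kappa> = (t - of_real y) powr (- (1/2))" using eq by simp
  qed
  have "(x - r) powr (-1/2 - 1) = (x - r) powr (-1/2) / (x - r) powr 1"
    by (simp only: powr_diff)
  hence AB: "(x - r) powr (-1/2 - 1) = (x - r) powr (-1/2) / (x - r)"
    using xr by simp
  have gen2: "\<And>(A::real) B d \<kappa>. A = B / d \<Longrightarrow> d \<noteq> 0 \<Longrightarrow>
      complex_of_real ((-1/2) * A) * \<kappa> = (complex_of_real B * \<kappa>) / (2 * (- complex_of_real d))"
    by (simp add: field_simps) (metis of_real_mult)
  have "of_real ((-1/2) * (x - r) powr (-1/2 - 1)) * \<kappa> = (complex_of_real ((x - r) powr (-1/2)) * \<kappa>) / (2 * (- complex_of_real (x - r)))"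
    by (rule gen2[OF AB]) (use xr in simp)
  also have "\<dots> = (t - of_real x) powr (- (1/2)) / (2 * (t - of_real x))"
    using eq[of x] xr tr by simp
  finally have eqd: "of_real ((-1/2) * (x - r) powr (-1/2 - 1)) * \<kappa> = (t - of_real x) powr (- (1/2)) / (2 * (t - of_real x))" .
  show ?thesis using d3 unfolding eqd .
qed

lemma R_deriv:
  assumes "x > 0"
  shows "((\<lambda>y. exp (- (real M / 2) * y) * y powr a) has_real_derivative
          (exp (- (real M / 2) * x) * x powr a * (- (real M / 2) + a / x))) (at x)"
proof -
  have "((\<lambda>y. exp (- (real M / 2) * y) * y powr a) has_real_derivative
          (exp (- (real M / 2) * x) * (- (real M / 2)) * x powr a + exp (- (real M / 2) * x) * (a * x powr (a - 1)))) (at x)"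
    using assms by (auto intro!: derivative_eq_intros)
  moreover have "x powr (a - 1) = x powr a / x" using assms by (simp add: powr_diff)
  ultimately show ?thesis using assms by (simp add: field_simps)
qed

lemma W_deriv:
  assumes "x > 0" "of_real x \<noteq> t"
  shows "(weight N M t has_vector_derivative
          (weight N M t x * (- (of_nat M / 2) + of_real (aa N M) / of_real x + 1 / (2 * (t - of_real x))))) (at x)"
proof -
  have W: "weight N M t = (\<lambda>y. of_real (exp (- (real M / 2) * y) * y powr aa N M) * (t - of_real y) powr (- (1/2)))"
    by (rule ext) (simp add: weight_def aa_def)
  have D: "(weight N M t has_vector_derivative
     (of_real (exp (- (real M / 2) * x) * x powr aa N M) * ((t - of_real x) powr (- (1/2)) / (2 * (t - of_real x)))
      + of_real (exp (- (real M / 2) * x) * x powr aa N M * (- (real M / 2) + aa N M / x)) * (t - of_real x) powr (- (1/2)))) (at x)"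
    unfolding W
    by (intro has_vector_derivative_mult has_vector_derivative_of_real R_deriv V_deriv assms)
  have z0: "t - of_real x \<noteq> 0" using assms by auto
  show ?thesis using D assms z0 unfolding W by (simp add: field_simps)
qed

lemma Dop_B: "Dop N M t q = pderiv (q * DB t) + q * (smult (- (of_nat M / 2)) (DB t)
            + smult ((of_nat M - of_nat N - 1) / 2) [:t, -1:] + smult (1/2) [:0, 1:])"
proof -
  have 1: "q * [:0, 1:] * [:t, -1:] = q * DB t" unfolding DB_def by (simp add: mult.assoc)
  have 2: "[:0, 1:] * [:t, -1:] = DB t" unfolding DB_def by simp
  show ?thesis unfolding Dop_def 1 2 ..
qed

lemma Q_deriv:
  assumes "x > 0" "of_real x \<noteq> t"
  shows "((\<lambda>y. poly (q * DB t) (of_real y) * weight N M t y) has_vector_derivative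
          (poly (Dop N M t q) (of_real x) * weight N M t x)) (at x)"
proof -
  have o: "((\<lambda>y. complex_of_real y) has_vector_derivative of_real 1) (at x)"
    by (rule has_vector_derivative_of_real[OF DERIV_ident])
  have P: "((\<lambda>y. poly (q * DB t) (of_real y)) has_vector_derivative poly (pderiv (q * DB t)) (of_real x)) (at x)"
    using field_vector_diff_chain_at[OF o poly_DERIV[of "q * DB t" "of_real x"]] by (simp add: o_def)
  have D: "((\<lambda>y. poly (q * DB t) (of_real y) * weight N M t y) has_vector_derivative
     (poly (q * DB t) (of_real x) * (weight N M t x * (- (of_nat M / 2) + of_real (aa N M) / of_real x + 1 / (2 * (t - of_real x))))
      + poly (pderiv (q * DB t)) (of_real x) * weight N M t x)) (at x)"
    by (intro has_vector_derivative_mult P W_deriv assms)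
  have z0: "t - of_real x \<noteq> 0" using assms by auto
  have x0: "complex_of_real x \<noteq> 0" using assms by simp
  have "poly (q * DB t) (of_real x) * (weight N M t x * (- (of_nat M / 2) + of_real (aa N M) / of_real x + 1 / (2 * (t - of_real x))))
      + poly (pderiv (q * DB t)) (of_real x) * weight N M t x = poly (Dop N M t q) (of_real x) * weight N M t x"
    unfolding Dop_B using z0 x0 by (simp add: DB_def aa_def field_simps)
  with D show ?thesis by simp
qed

definition Fw :: "nat \<Rightarrow> nat \<Rightarrow> complex \<Rightarrow> complex poly \<Rightarrow> real \<Rightarrow> complex" where
  "Fw N M t p x = poly p (complex_of_real x) * weight N M t x"

definition Iw :: "nat \<Rightarrow> nat \<Rightarrow> complex \<Rightarrow> complex poly \<Rightarrow> real \<Rightarrow> complex" where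
  "Iw N M t g x = (LINT y:{0<..}|lborel. complex_of_real (eps (x - y)) * Fw N M t g y)"

definition rho :: "nat \<Rightarrow> nat \<Rightarrow> real \<Rightarrow> complex" where
  "rho N M x = complex_of_real (x ^ (M - N) * exp (- real M * x))"

lemma poly_meas: "(\<lambda>x::real. poly p (complex_of_real x)) \<in> borel_measurable borel"
  by (intro borel_measurable_continuous_onI continuous_intros)

lemma Fw_meas: "Fw N M t p \<in> borel_measurable borel"
proof -
  have "(\<lambda>x. poly p (complex_of_real x) * weight N M t x) \<in> borel_measurable borel"
    using poly_meas W_meas by measurable
  thus ?thesis unfolding Fw_def[abs_def] .
qed

lemma eps_meas: "(\<lambda>x. complex_of_real (eps x)) \<in> borel_measurable borel"
  unfolding eps_def by measurable

context
  fixes N M :: nat and t :: complex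
  assumes MN: "M > N"
begin

lemma int_Fw: "set_integrable lborel {0<..} (Fw N M t p)"
proof -
  define B where "B = (\<Sum>i\<le>degree p. norm (coeff p i))"
  define k where "k = degree p + (M - N)"
  define sb where "sb = (\<lambda>x. (1+x)^k * exp(-(real M / 2)*x) * (1 + (x - Re t) powr (-1/2)))"
  have M0: "real M / 2 > 0" using MN by simp
  have sbi: "set_integrable lborel {0<..} (\<lambda>x. B * sb x)"
    unfolding sb_def using sb_integrable[OF M0, of k "Re t"] by (intro set_integrable_mult_right) auto
  show ?thesis
  proof (rule set_integrable_bound[OF sbi])
    show "set_borel_measurable lborel {0<..} (Fw N M t p)"
      unfolding set_borel_measurable_def using Fw_meas by measurable
    show "AE x in lborel. x \<in> {0<..} \<longrightarrow> norm (Fw N M t p x) \<le> norm (B * sb x)"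
      using AE_lborel_singleton[of "Re t"]
    proof eventually_elim
      case (elim x)
      show ?case
      proof
        assume "x \<in> {0<..}"
        hence x: "x > 0" by simp
        have P: "norm (poly p (of_real x)) \<le> B * (1+x)^(degree p)"
          unfolding B_def using poly_norm_bound[of x p] x by simp
        have Wb: "norm (weight N M t x) \<le> (1+x)^(M-N) * exp (- (real M / 2) * x) * (1 + (x - Re t) powr (-1/2))"
          using W_bound[OF MN x elim] .
        have "norm (Fw N M t p x) = norm (poly p (of_real x)) * norm (weight N M t x)"
          by (simp add: Fw_def norm_mult)
        also have "\<dots> \<le> (B * (1+x)^(degree p)) * ((1+x)^(M-N) * exp (- (real M / 2) * x) * (1 + (x - Re t) powr (-1/2)))"
          using P Wb x by (intro mult_mono) (auto simp: B_def sum_nonneg)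
        also have "\<dots> = B * sb x" unfolding sb_def k_def by (simp add: power_add algebra_simps)
        also have "\<dots> \<le> norm (B * sb x)" by simp
        finally show "norm (Fw N M t p x) \<le> norm (B * sb x)" .
      qed
    qed
  qed
qed

lemma int_rho: "set_integrable lborel {0<..} (\<lambda>x. poly p (complex_of_real x) * rho N M x)"
proof -
  define B where "B = (\<Sum>i\<le>degree p. norm (coeff p i))"
  define k where "k = degree p + (M - N)"
  define sb where "sb = (\<lambda>x. (1+x)^k * exp(- real M * x) * (1 + (x - 0) powr (-1/2)))"
  have M0: "real M > 0" using MN by simp
  have sbi: "set_integrable lborel {0<..} (\<lambda>x. B * sb x)"
    unfolding sb_def using sb_integrable[OF M0, of k 0] by (intro set_integrable_mult_right) auto
  show ?thesis
  proof (rule set_integrable_bound[OF sbi])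
    show "set_borel_measurable lborel {0<..} (\<lambda>x. poly p (complex_of_real x) * rho N M x)"
      unfolding set_borel_measurable_def rho_def using poly_meas by measurable
    show "AE x in lborel. x \<in> {0<..} \<longrightarrow> norm (poly p (complex_of_real x) * rho N M x) \<le> norm (B * sb x)"
    proof (rule AE_I2, rule impI)
      fix x :: real assume "x \<in> {0<..}"
      hence x: "x > 0" by simp
      have P: "norm (poly p (of_real x)) \<le> B * (1+x)^(degree p)"
        unfolding B_def using poly_norm_bound[of x p] x by simp
      have X: "x ^ (M - N) \<le> (1+x)^(M-N)" using x by (intro power_mono) auto
      have Pw: "0 \<le> x powr (-1/2)" by simp
      have "norm (poly p (complex_of_real x) * rho N M x) = norm (poly p (of_real x)) * (x ^ (M - N) * exp (- real M * x))"
        using x by (simp add: rho_def norm_mult norm_power)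
      also have "\<dots> \<le> (B * (1+x)^(degree p)) * ((1+x)^(M-N) * exp (- real M * x))"
        using P X x by (intro mult_mono) (auto simp: B_def sum_nonneg)
      also have "\<dots> = B * ((1+x)^k * exp(- real M * x))" unfolding k_def by (simp add: power_add algebra_simps)
      also have "\<dots> \<le> B * sb x" unfolding sb_def using Pw x B_def
        by (intro mult_left_mono) (auto intro!: mult_left_le simp: sum_nonneg)
      also have "\<dots> \<le> norm (B * sb x)" by simp
      finally show "norm (poly p (complex_of_real x) * rho N M x) \<le> norm (B * sb x)" .
    qed
  qed
qed

lemma int_epsF: "set_integrable lborel {0<..} (\<lambda>y. complex_of_real (eps (x - y)) * Fw N M t g y)"
proof (rule set_integrable_bound[OF int_Fw[of g]])
  show "set_borel_measurable lborel {0<..} (\<lambda>y. complex_of_real (eps (x - y)) * Fw N M t g y)"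
    unfolding set_borel_measurable_def eps_def using Fw_meas by measurable
  show "AE y in lborel. y \<in> {0<..} \<longrightarrow> norm (complex_of_real (eps (x - y)) * Fw N M t g y) \<le> norm (Fw N M t g y)"
    by (rule AE_I2) (auto simp: norm_mult eps_def sgn_real_def mult_left_le)
qed

definition Kg where "Kg g = (LINT y:{0<..}|lborel. norm (Fw N M t g y))"

lemma Iw_bound: "norm (Iw N M t g x) \<le> Kg g"
proof -
  have "norm (Iw N M t g x) \<le> (LINT y:{0<..}|lborel. norm (complex_of_real (eps (x - y)) * Fw N M t g y))"
    unfolding Iw_def by (rule set_integral_norm_bound[OF int_epsF])
  also have "\<dots> \<le> Kg g" unfolding Kg_def
    by (rule set_integral_mono[OF set_integrable_norm[OF int_epsF] set_integrable_norm[OF int_Fw]])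
       (auto simp: norm_mult eps_def sgn_real_def mult_left_le)
  finally show ?thesis .
qed

lemma Kg_nonneg: "Kg g \<ge> 0"
  using Iw_bound[of g 0] norm_ge_zero order_trans by blast

lemma Iw_meas: "Iw N M t g \<in> borel_measurable borel"
proof -
  have "(\<lambda>x. \<integral>y. indicator {0<..} y *\<^sub>R (complex_of_real (eps (x - y)) * Fw N M t g y) \<partial>lborel) \<in> borel_measurable borel"
    using Fw_meas unfolding eps_def by measurable
  thus ?thesis unfolding Iw_def[abs_def] set_lebesgue_integral_def .
qed

lemma skew_rep: "skew1 N M t f g = (LINT x:{0<..}|lborel. Fw N M t f x * Iw N M t g x)"
  unfolding skew1_def Iw_def
proof (rule set_lebesgue_integral_cong, simp, intro allI impI)
  fix x :: real assume "x \<in> {0<..}"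
  have "(LINT y:{0<..}|lborel. complex_of_real (eps (x - y)) * poly f (complex_of_real x) * poly g (complex_of_real y) * weight N M t x * weight N M t y)
      = (LINT y:{0<..}|lborel. Fw N M t f x * (complex_of_real (eps (x - y)) * Fw N M t g y))"
    by (rule set_lebesgue_integral_cong) (auto simp: Fw_def mult_ac)
  also have "\<dots> = Fw N M t f x * (LINT y:{0<..}|lborel. complex_of_real (eps (x - y)) * Fw N M t g y)"
    by (rule set_integral_mult_right)
  finally show "(LINT y:{0<..}|lborel. complex_of_real (eps (x - y)) * poly f (complex_of_real x) * poly g (complex_of_real y) * weight N M t x * weight N M t y)
      = Fw N M t f x * (LINT y:{0<..}|lborel. complex_of_real (eps (x - y)) * Fw N M t g y)" .
qed

lemma int_skew: "set_integrable lborel {0<..} (\<lambda>x. Fw N M t f x * Iw N M t g x)"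
proof (rule set_integrable_bound)
  show "set_integrable lborel {0<..} (\<lambda>x. complex_of_real (Kg g) * Fw N M t f x)"
    using int_Fw by (intro set_integrable_mult_right) auto
  show "set_borel_measurable lborel {0<..} (\<lambda>x. Fw N M t f x * Iw N M t g x)"
    unfolding set_borel_measurable_def using Fw_meas Iw_meas by measurable
  show "AE x in lborel. x \<in> {0<..} \<longrightarrow> norm (Fw N M t f x * Iw N M t g x) \<le> norm (complex_of_real (Kg g) * Fw N M t f x)"
  proof (rule AE_I2, rule impI)
    fix x :: real
    have "norm (Fw N M t f x * Iw N M t g x) \<le> norm (Fw N M t f x) * Kg g"
      unfolding norm_mult by (intro mult_left_mono Iw_bound) auto
    also have "\<dots> = norm (complex_of_real (Kg g) * Fw N M t f x)" using Kg_nonneg by (simp add: norm_mult)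
    finally show "norm (Fw N M t f x * Iw N M t g x) \<le> norm (complex_of_real (Kg g) * Fw N M t f x)" .
  qed
qed

lemma skew_add: "skew1 N M t (f1 + f2) g = skew1 N M t f1 g + skew1 N M t f2 g"
proof -
  have "skew1 N M t (f1 + f2) g = (LINT x:{0<..}|lborel. Fw N M t f1 x * Iw N M t g x + Fw N M t f2 x * Iw N M t g x)"
    unfolding skew_rep by (rule set_lebesgue_integral_cong) (auto simp: Fw_def algebra_simps)
  also have "\<dots> = skew1 N M t f1 g + skew1 N M t f2 g"
    unfolding skew_rep by (rule set_integral_add(2)[OF int_skew int_skew])
  finally show ?thesis .
qed

lemma skew_smult: "skew1 N M t (smult c f) g = c * skew1 N M t f g"
proof -
  have "skew1 N M t (smult c f) g = (LINT x:{0<..}|lborel. c * (Fw N M t f x * Iw N M t g x))"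
    unfolding skew_rep by (rule set_lebesgue_integral_cong) (auto simp: Fw_def algebra_simps)
  also have "\<dots> = c * skew1 N M t f g" unfolding skew_rep by (rule set_integral_mult_right)
  finally show ?thesis .
qed

end

lemma int_parts_gen:
  fixes h :: "real \<Rightarrow> complex"
  assumes h: "set_integrable lborel {0<..} h" and x: "x > 0"
  shows "h integrable_on {0..x}" "(LINT y:{0<..<x}|lborel. h y) = integral {0..x} h"
        "(LINT y:{0<..x}|lborel. h y) = integral {0..x} h"
proof -
  have s1: "set_integrable lborel {0<..<x} h" by (rule set_integrable_subset[OF h]) auto
  have s2: "set_integrable lborel {0<..x} h" by (rule set_integrable_subset[OF h]) auto
  have "h integrable_on {0<..<x}" using set_borel_integral_eq_integral(1)[OF s1] .
  thus "h integrable_on {0..x}" using integrable_on_Icc_iff_Ioo by blast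
  have e1: "(LINT y:{0<..<x}|lborel. h y) = integral {0..x} h"
    using set_borel_integral_eq_integral(2)[OF s1] integral_open_interval_real[of 0 x h] by simp
  thus "(LINT y:{0<..<x}|lborel. h y) = integral {0..x} h" .
  have "(LINT y:{0<..x}|lborel. h y) = (LINT y:{0<..<x}|lborel. h y)"
  proof (rule set_integral_cong_set)
    show "set_borel_measurable lborel {0<..<x} h" using s1 unfolding set_integrable_def set_borel_measurable_def by simp
    show "set_borel_measurable lborel {0<..x} h" using s2 unfolding set_integrable_def set_borel_measurable_def by simp
    show "AE y in lborel. (y \<in> {0<..<x}) = (y \<in> {0<..x})"
      using AE_lborel_singleton[of x] by eventually_elim auto
  qed
  thus "(LINT y:{0<..x}|lborel. h y) = integral {0..x} h" using e1 by simp
qed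

lemma LINT_sub:
  fixes f :: "real \<Rightarrow> complex"
  assumes "A \<subseteq> B"
  shows "(LINT y:B|lborel. indicator A y *\<^sub>R f y) = (LINT y:A|lborel. f y)"
  unfolding set_lebesgue_integral_def
  by (rule Bochner_Integration.integral_cong) (use assms in \<open>auto split: split_indicator\<close>)

lemma int_sub:
  fixes f :: "real \<Rightarrow> complex"
  assumes "A \<subseteq> B" "set_integrable lborel A f"
  shows "set_integrable lborel B (\<lambda>y. indicator A y *\<^sub>R f y)"
proof -
  have "(\<lambda>y. indicator B y *\<^sub>R (indicator A y *\<^sub>R f y)) = (\<lambda>y. indicator A y *\<^sub>R f y)"
    using assms(1) by (auto simp: fun_eq_iff split: split_indicator)
  thus ?thesis using assms(2) unfolding set_integrable_def by simp
qed

lemma int_lim: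
  fixes h :: "real \<Rightarrow> complex"
  assumes h: "set_integrable lborel {0<..} h"
  shows "(\<lambda>n. integral {0..real n} h) \<longlonglongrightarrow> (LINT x:{0<..}|lborel. h x)"
proof -
  define f where "f = (\<lambda>x. indicator {0<..} x *\<^sub>R h x)"
  have fi: "integrable lborel f" using h unfolding f_def set_integrable_def .
  have "((\<lambda>y. \<integral>x. indicator {..y} x *\<^sub>R f x \<partial>lborel) \<longlongrightarrow> \<integral>x. f x \<partial>lborel) at_top"
    by (rule tendsto_integral_at_top[OF _ fi]) simp
  from filterlim_compose[OF this filterlim_real_sequentially]
  have L: "(\<lambda>n. \<integral>x. indicator {..real n} x *\<^sub>R f x \<partial>lborel) \<longlonglongrightarrow> (LINT x:{0<..}|lborel. h x)"
    unfolding f_def set_lebesgue_integral_def by (simp add: o_def)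
  show ?thesis
  proof (rule tendsto_cong[THEN iffD1, OF _ L])
    show "\<forall>\<^sub>F n in sequentially. (\<integral>x. indicator {..real n} x *\<^sub>R f x \<partial>lborel) = integral {0..real n} h"
      using eventually_ge_at_top[of 1]
    proof eventually_elim
      case (elim n)
      hence n: "real n > 0" by simp
      have "(\<integral>x. indicator {..real n} x *\<^sub>R f x \<partial>lborel) = (LINT x:{0<..real n}|lborel. h x)"
        unfolding f_def set_lebesgue_integral_def
        by (rule Bochner_Integration.integral_cong) (auto split: split_indicator)
      also have "\<dots> = integral {0..real n} h" using int_parts_gen(3)[OF h n] .
      finally show ?case .
    qed
  qed
qed

lemma exp_seq_zero: "c > 0 \<Longrightarrow> (\<lambda>n. exp (- c * real n)) \<longlonglongrightarrow> 0"
proof -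
  assume c: "c > 0"
  have "(\<lambda>n. (exp (- c)) ^ n) \<longlonglongrightarrow> 0" using c by (intro LIMSEQ_power_zero) simp
  moreover have "(\<lambda>n. (exp (- c)) ^ n) = (\<lambda>n. exp (- c * real n))"
    by (rule ext) (simp add: exp_of_nat_mult[symmetric] mult.commute)
  ultimately show ?thesis by simp
qed

definition Qf :: "nat \<Rightarrow> nat \<Rightarrow> complex \<Rightarrow> complex poly \<Rightarrow> real \<Rightarrow> complex" where
  "Qf N M t q y = poly (q * DB t) (complex_of_real y) * weight N M t y"

context
  fixes N M :: nat and t :: complex
  assumes MN: "M > N"
begin

lemma I_eq:
  assumes x: "x > 0"
  shows "Iw N M t g x = integral {0..x} (Fw N M t g) - (LINT y:{0<..}|lborel. Fw N M t g y) / 2"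
proof -
  let ?F = "Fw N M t g"
  have F: "set_integrable lborel {0<..} ?F" by (rule int_Fw[OF MN])
  have sub1: "{0<..<x} \<subseteq> {0<..}" and sub2: "{0<..x} \<subseteq> {0<..}" by auto
  have s1: "set_integrable lborel {0<..<x} ?F" by (rule set_integrable_subset[OF F]) auto
  have s2: "set_integrable lborel {0<..x} ?F" by (rule set_integrable_subset[OF F]) auto
  have i1: "set_integrable lborel {0<..} (\<lambda>y. indicator {0<..<x} y *\<^sub>R ?F y)" by (rule int_sub[OF _ s1]) auto
  have i2: "set_integrable lborel {0<..} (\<lambda>y. indicator {0<..x} y *\<^sub>R ?F y)" by (rule int_sub[OF _ s2]) auto
  have pt: "complex_of_real (eps (x - y)) * ?F y = (1/2) * (indicator {0<..<x} y *\<^sub>R ?F y) + (1/2) * (indicator {0<..x} y *\<^sub>R ?F y) - (1/2) * ?F y"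
    if "y \<in> {0<..}" for y
    using that by (cases "y < x"; cases "y = x") (auto simp: eps_def split: split_indicator)
  have "Iw N M t g x = (LINT y:{0<..}|lborel. (1/2) * (indicator {0<..<x} y *\<^sub>R ?F y) + (1/2) * (indicator {0<..x} y *\<^sub>R ?F y) - (1/2) * ?F y)"
    unfolding Iw_def by (rule set_lebesgue_integral_cong) (use pt in auto)
  also have "\<dots> = (LINT y:{0<..}|lborel. (1/2) * (indicator {0<..<x} y *\<^sub>R ?F y) + (1/2) * (indicator {0<..x} y *\<^sub>R ?F y)) - (LINT y:{0<..}|lborel. (1/2) * ?F y)"
    by (rule set_integral_diff(2)) (use i1 i2 F in \<open>intro set_integral_add(1) set_integrable_mult_right; simp\<close>)+
  also have "(LINT y:{0<..}|lborel. (1/2) * (indicator {0<..<x} y *\<^sub>R ?F y) + (1/2) * (indicator {0<..x} y *\<^sub>R ?F y))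
     = (LINT y:{0<..}|lborel. (1/2) * (indicator {0<..<x} y *\<^sub>R ?F y)) + (LINT y:{0<..}|lborel. (1/2) * (indicator {0<..x} y *\<^sub>R ?F y))"
    by (rule set_integral_add(2)) (use i1 i2 in \<open>intro set_integrable_mult_right; simp\<close>)+
  also have "(LINT y:{0<..}|lborel. (1/2::complex) * (indicator {0<..<x} y *\<^sub>R ?F y)) = (1/2) * (LINT y:{0<..}|lborel. indicator {0<..<x} y *\<^sub>R ?F y)"
    by (rule set_integral_mult_right)
  also have "(LINT y:{0<..}|lborel. (1/2::complex) * (indicator {0<..x} y *\<^sub>R ?F y)) = (1/2) * (LINT y:{0<..}|lborel. indicator {0<..x} y *\<^sub>R ?F y)"
    by (rule set_integral_mult_right)
  also have "(LINT y:{0<..}|lborel. (1/2::complex) * ?F y) = (1/2) * (LINT y:{0<..}|lborel. ?F y)"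
    by (rule set_integral_mult_right)
  also have "(LINT y:{0<..}|lborel. indicator {0<..<x} y *\<^sub>R ?F y) = integral {0..x} ?F"
    using LINT_sub[OF sub1, of ?F] int_parts_gen(2)[OF F x] by simp
  also have "(LINT y:{0<..}|lborel. indicator {0<..x} y *\<^sub>R ?F y) = integral {0..x} ?F"
    using LINT_sub[OF sub2, of ?F] int_parts_gen(3)[OF F x] by simp
  finally show ?thesis by simp
qed

lemma W_cont: "x > 0 \<Longrightarrow> complex_of_real x \<noteq> t \<Longrightarrow> isCont (weight N M t) x"
  using W_deriv has_vector_derivative_continuous by blast

lemma Fw_cont: "x > 0 \<Longrightarrow> complex_of_real x \<noteq> t \<Longrightarrow> isCont (Fw N M t p) x"
  unfolding Fw_def[abs_def] by (intro continuous_intros W_cont) auto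

lemma Qf_deriv: "x > 0 \<Longrightarrow> complex_of_real x \<noteq> t \<Longrightarrow> (Qf N M t q has_vector_derivative Fw N M t (Dop N M t q) x) (at x)"
  unfolding Qf_def[abs_def] Fw_def using Q_deriv by blast

lemma Qf_norm:
  assumes "y \<ge> 0"
  shows "norm (Qf N M t q y) = norm (poly q (complex_of_real y)) * exp (- (real M / 2) * y) * y powr (1 + aa N M) * norm (t - complex_of_real y) powr (1/2)"
proof -
  have pB: "poly (q * DB t) (complex_of_real y) = poly q (complex_of_real y) * (of_real y * (t - of_real y))"
    by (simp add: DB_def algebra_simps)
  have "norm (t - complex_of_real y) * norm (t - complex_of_real y) powr (-1/2) = norm (t - complex_of_real y) powr (1 + (-1/2))"
    by (rule powr_mult_base) simp
  hence A: "norm (t - complex_of_real y) * norm (t - complex_of_real y) powr (-1/2) = norm (t - complex_of_real y) powr (1/2)" by simp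
  have B: "y * y powr aa N M = y powr (1 + aa N M)" using assms by (rule powr_mult_base)
  have "norm (Qf N M t q y) = norm (poly q (complex_of_real y)) * exp (- (real M / 2) * y) * (y * y powr aa N M) * (norm (t - complex_of_real y) * norm (t - complex_of_real y) powr (-1/2))"
    unfolding Qf_def pB norm_mult norm_W[OF assms] using assms by (simp add: mult_ac)
  thus ?thesis unfolding A B .
qed

lemma Qf_cont: "continuous_on {0..b} (Qf N M t q)"
proof -
  define \<beta> where "\<beta> = (\<lambda>y. norm (poly q (complex_of_real y)) * exp (- (real M / 2) * y) * \<bar>y\<bar> powr (1 + aa N M) * norm (t - complex_of_real y) powr (1/2))"
  have a0: "aa N M \<ge> 0" using MN unfolding aa_def by simp
  have c1: "continuous_on UNIV (\<lambda>y::real. \<bar>y\<bar> powr (1 + aa N M))"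
    by (rule continuous_on_powr') (use a0 in \<open>auto intro!: continuous_intros\<close>)
  have c2: "continuous_on UNIV (\<lambda>y::real. norm (t - complex_of_real y) powr (1/2))"
    by (rule continuous_on_powr') (auto intro!: continuous_intros)
  have c0: "continuous_on UNIV (\<lambda>y::real. norm (poly q (complex_of_real y)) * exp (- (real M / 2) * y))"
    by (intro continuous_intros)
  have bc: "continuous_on UNIV \<beta>"
    unfolding \<beta>_def by (intro continuous_on_mult c0 c1 c2)
  show ?thesis
    unfolding continuous_on_eq_continuous_within
  proof
    fix y0 assume y0: "y0 \<in> {0..b}"
    show "continuous (at y0 within {0..b}) (Qf N M t q)"
    proof (cases "y0 > 0 \<and> complex_of_real y0 \<noteq> t")
      case True
      hence "isCont (Qf N M t q) y0" using Qf_deriv has_vector_derivative_continuous by blast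
      thus ?thesis using continuous_at_imp_continuous_within by blast
    next
      case False
      hence z: "y0 = 0 \<or> complex_of_real y0 = t" using y0 by auto
      have Q0: "Qf N M t q y0 = 0" using z by (auto simp: Qf_def DB_def)
      have b0: "\<beta> y0 = 0" using z a0 unfolding \<beta>_def by auto
      have "((\<lambda>y. \<beta> y) \<longlongrightarrow> \<beta> y0) (at y0 within {0..b})"
        using bc by (meson UNIV_I continuous_on_def tendsto_within_subset subset_UNIV)
      hence bt: "(\<beta> \<longlongrightarrow> 0) (at y0 within {0..b})" using b0 by simp
      have "(Qf N M t q \<longlongrightarrow> 0) (at y0 within {0..b})"
      proof (rule Lim_null_comparison[OF _ bt])
        show "\<forall>\<^sub>F y in at y0 within {0..b}. norm (Qf N M t q y) \<le> \<beta> y"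
          unfolding eventually_at_filter by (rule always_eventually) (auto simp: \<beta>_def Qf_norm)
      qed
      thus ?thesis unfolding continuous_within Q0 .
    qed
  qed
qed

end

context
  fixes N M :: nat and t :: complex
  assumes MN: "M > N"
begin

lemma Qf_lim: "(\<lambda>n. Qf N M t q (real n)) \<longlonglongrightarrow> 0"
proof -
  define B where "B = (\<Sum>i\<le>degree (q * DB t). norm (coeff (q * DB t) i))"
  define k where "k = degree (q * DB t) + (M - N)"
  have c: "real M / 2 > 0" using MN by simp
  obtain D where D: "D > 0" "\<forall>x\<ge>0. (1+x)^k * exp(-(real M / 2)*x) \<le> D * exp(-((real M / 2)/2)*x)"
    using polyexp_decay[OF c, of k] by blast
  have B0: "B \<ge> 0" unfolding B_def by (simp add: sum_nonneg)
  define R where "R = \<bar>Re t\<bar> + 1"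
  show ?thesis
  proof (rule Lim_null_comparison)
    show "(\<lambda>n. 2 * B * D * exp (- (real M / 4) * real n)) \<longlonglongrightarrow> 0"
      using exp_seq_zero[of "real M / 4"] MN by (intro tendsto_mult_right_zero) auto
    show "\<forall>\<^sub>F n in sequentially. norm (Qf N M t q (real n)) \<le> 2 * B * D * exp (- (real M / 4) * real n)"
      using eventually_ge_at_top[of "nat \<lceil>R\<rceil>"]
    proof eventually_elim
      case (elim n)
      define y where "y = real n"
      have yR: "y \<ge> R" using elim unfolding y_def by linarith
      hence y: "y > 0" "y \<noteq> Re t" "y - Re t \<ge> 1" unfolding R_def by auto
      have "(y - Re t) powr (-1/2) \<le> 1 powr (-1/2)" using y by (intro powr_mono2') auto
      hence pw: "1 + (y - Re t) powr (-1/2) \<le> 2" by simp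
      have P: "norm (poly (q * DB t) (of_real y)) \<le> B * (1+y)^(degree (q * DB t))"
        unfolding B_def using poly_norm_bound[of y "q * DB t"] y by simp
      have Wb: "norm (weight N M t y) \<le> (1+y)^(M-N) * exp (- (real M / 2) * y) * (1 + (y - Re t) powr (-1/2))"
        using W_bound[OF MN y(1) y(2)] .
      have "norm (Qf N M t q y) = norm (poly (q * DB t) (of_real y)) * norm (weight N M t y)"
        by (simp add: Qf_def norm_mult)
      also have "\<dots> \<le> (B * (1+y)^(degree (q * DB t))) * ((1+y)^(M-N) * exp (- (real M / 2) * y) * 2)"
        using P Wb pw y B0 by (intro mult_mono order_trans[OF Wb] mult_left_mono) auto
      also have "\<dots> = 2 * B * ((1+y)^k * exp (- (real M / 2) * y))" unfolding k_def by (simp add: power_add algebra_simps)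
      also have "\<dots> \<le> 2 * B * (D * exp(-((real M / 2)/2)*y))" using D y B0 by (intro mult_left_mono) auto
      also have "\<dots> = 2 * B * D * exp (- (real M / 4) * y)" by simp
      finally show ?case unfolding y_def .
    qed
  qed
qed

lemma rhoq_eq:
  assumes "x > 0" "complex_of_real x \<noteq> t"
  shows "Qf N M t q x * Fw N M t g x = poly (q * g) (complex_of_real x) * rho N M x"
proof -
  have "Qf N M t q x * Fw N M t g x = poly q (complex_of_real x) * poly g (complex_of_real x) * of_real x * ((t - of_real x) * (weight N M t x * weight N M t x))"
    by (simp add: Qf_def Fw_def DB_def algebra_simps)
  also have "\<dots> = poly q (complex_of_real x) * poly g (complex_of_real x) * (of_real x * of_real (exp (- real M * x) * x ^ (M - N - 1)))"
    using W_sq[OF MN assms] by (simp add: mult.assoc)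
  also have "of_real x * of_real (exp (- real M * x) * x ^ (M - N - 1)) = (of_real (x ^ (M - N) * exp (- real M * x)) :: complex)"
  proof -
    have "M - N = Suc (M - N - 1)" using MN by simp
    hence "x ^ (M - N) = x * x ^ (M - N - 1)" by (metis power_Suc)
    thus ?thesis by (simp add: algebra_simps)
  qed
  finally show ?thesis by (simp add: rho_def mult.assoc)
qed

lemma ibp_finite:
  assumes b: "b > 0"
  shows "integral {0..b} (\<lambda>x. Fw N M t (Dop N M t q) x * Iw N M t g x)
       = Qf N M t q b * (integral {0..b} (Fw N M t g) - (LINT y:{0<..}|lborel. Fw N M t g y) / 2)
         - integral {0..b} (\<lambda>x. poly (q * g) (complex_of_real x) * rho N M x)"
proof -
  let ?F = "Fw N M t g"
  let ?T = "(LINT y:{0<..}|lborel. Fw N M t g y)"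
  let ?G = "\<lambda>y. integral {0..y} ?F - ?T / 2"
  let ?H = "\<lambda>y. Qf N M t q y * ?G y"
  let ?h1 = "\<lambda>x. Fw N M t (Dop N M t q) x * ?G x"
  let ?h2 = "\<lambda>x. Qf N M t q x * ?F x"
  let ?rq = "\<lambda>x. poly (q * g) (complex_of_real x) * rho N M x"
  have Fi: "?F integrable_on {0..b}" using int_parts_gen(1)[OF int_Fw[OF MN] b] .
  have FTC: "((\<lambda>x. ?h1 x + ?h2 x) has_integral (?H b - ?H 0)) {0..b}"
  proof (rule fundamental_theorem_of_calculus_interior_strong[of "{Re t}"])
    show "finite {Re t}" by simp
    show "0 \<le> b" using b by simp
    show "continuous_on {0..b} ?H"
      by (intro continuous_on_mult Qf_cont[OF MN] continuous_on_diff indefinite_integral_continuous_1[OF Fi] continuous_on_const)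
    fix x assume x: "x \<in> {0<..<b} - {Re t}"
    have x0: "x > 0" and xt: "complex_of_real x \<noteq> t" using x by auto
    have int: "x \<in> interior ({0..b} - {Re t})"
    proof -
      have "{0<..<b} - {Re t} \<subseteq> interior ({0..b} - {Re t})"
        by (rule interior_maximal) (auto intro!: open_Diff)
      thus ?thesis using x by blast
    qed
    have Fc: "continuous (at x within ({0..b} - {Re t})) ?F"
      using Fw_cont[OF MN x0 xt] continuous_at_imp_continuous_within by blast
    have Gd0: "((\<lambda>u. integral {0..u} ?F) has_vector_derivative ?F x) (at x within ({0..b} - {Re t}))"
      by (rule integral_has_vector_derivative_continuous_at[OF Fi _ _ Fc]) (use x in auto)
    hence Gd: "((\<lambda>u. integral {0..u} ?F) has_vector_derivative ?F x) (at x)"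
      using at_within_interior[OF int] by simp
    have Gd2: "(?G has_vector_derivative (?F x - 0)) (at x)"
      by (intro has_vector_derivative_diff Gd has_vector_derivative_const)
    have Hd: "(?H has_vector_derivative (Qf N M t q x * (?F x - 0) + Fw N M t (Dop N M t q) x * ?G x)) (at x)"
      by (intro has_vector_derivative_mult Qf_deriv[OF MN x0 xt] Gd2)
    show "(?H has_vector_derivative ?h1 x + ?h2 x) (at x)"
      using Hd by (simp add: algebra_simps)
  qed
  have H0: "?H 0 = 0" by (simp add: Qf_def DB_def)
  have rc: "continuous_on {0..b} ?rq" unfolding rho_def by (intro continuous_intros)
  have ri: "(?rq has_integral integral {0..b} ?rq) {0..b}"
    using integrable_continuous_interval[OF rc] by (simp add: has_integral_iff)
  have h2i: "(?h2 has_integral integral {0..b} ?rq) {0..b}"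
  proof (rule has_integral_spike_finite[OF _ _ ri, of "{0, Re t}"])
    show "finite {0, Re t}" by simp
    fix x assume "x \<in> {0..b} - {0, Re t}"
    hence "x > 0" "complex_of_real x \<noteq> t" by auto
    thus "?h2 x = ?rq x" by (rule rhoq_eq)
  qed
  have "((\<lambda>x. (?h1 x + ?h2 x) - ?h2 x) has_integral ((?H b - ?H 0) - integral {0..b} ?rq)) {0..b}"
    by (rule has_integral_diff[OF FTC h2i])
  moreover have Q0: "Qf N M t q 0 = 0" by (simp add: Qf_def DB_def)
  ultimately have h1i: "(?h1 has_integral (?H b - integral {0..b} ?rq)) {0..b}" by simp
  have "integral {0..b} (\<lambda>x. Fw N M t (Dop N M t q) x * Iw N M t g x) = integral {0..b} ?h1"
  proof (rule integral_spike[of "{0}"])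
    show "negligible {0::real}" by auto
    fix x assume "x \<in> {0..b} - {0}"
    hence "x > 0" by auto
    thus "?h1 x = Fw N M t (Dop N M t q) x * Iw N M t g x" using I_eq[OF MN] by simp
  qed
  also have "\<dots> = ?H b - integral {0..b} ?rq" using h1i by (rule integral_unique)
  finally show ?thesis .
qed

lemma ibp: "skew1 N M t (Dop N M t q) g = - (LINT x:{0<..}|lborel. poly (q * g) (complex_of_real x) * rho N M x)"
proof -
  let ?T = "(LINT y:{0<..}|lborel. Fw N M t g y)"
  let ?rq = "\<lambda>x. poly (q * g) (complex_of_real x) * rho N M x"
  have A: "(\<lambda>n. integral {0..real n} (\<lambda>x. Fw N M t (Dop N M t q) x * Iw N M t g x)) \<longlonglongrightarrow> skew1 N M t (Dop N M t q) g"
    unfolding skew_rep[OF MN] by (rule int_lim[OF int_skew[OF MN]])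
  have Hn: "(\<lambda>n. Qf N M t q (real n) * (integral {0..real n} (Fw N M t g) - ?T / 2)) \<longlonglongrightarrow> 0"
  proof (rule Lim_null_comparison)
    show "(\<lambda>n. norm (Qf N M t q (real n)) * Kg N M t g) \<longlonglongrightarrow> 0"
      using tendsto_norm_zero[OF Qf_lim] by (intro tendsto_mult_left_zero)
    show "\<forall>\<^sub>F n in sequentially. norm (Qf N M t q (real n) * (integral {0..real n} (Fw N M t g) - ?T / 2)) \<le> norm (Qf N M t q (real n)) * Kg N M t g"
      using eventually_ge_at_top[of 1]
    proof eventually_elim
      case (elim n)
      hence n: "real n > 0" by simp
      have "integral {0..real n} (Fw N M t g) - ?T / 2 = Iw N M t g (real n)" using I_eq[OF MN n] by simp
      thus ?case using Iw_bound[OF MN, where g=g and x="real n"] by (simp add: norm_mult mult_left_mono)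
    qed
  qed
  have B: "(\<lambda>n. Qf N M t q (real n) * (integral {0..real n} (Fw N M t g) - ?T / 2) - integral {0..real n} ?rq)
           \<longlonglongrightarrow> 0 - (LINT x:{0<..}|lborel. ?rq x)"
    by (intro tendsto_diff Hn int_lim int_rho[OF MN])
  have eq: "\<forall>\<^sub>F n in sequentially. integral {0..real n} (\<lambda>x. Fw N M t (Dop N M t q) x * Iw N M t g x)
      = Qf N M t q (real n) * (integral {0..real n} (Fw N M t g) - ?T / 2) - integral {0..real n} ?rq"
    using eventually_ge_at_top[of 1] by eventually_elim (rule ibp_finite, simp)
  have "(\<lambda>n. integral {0..real n} (\<lambda>x. Fw N M t (Dop N M t q) x * Iw N M t g x)) \<longlonglongrightarrow> 0 - (LINT x:{0<..}|lborel. ?rq x)"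
    using tendsto_cong[OF eq] B by simp
  from LIMSEQ_unique[OF A this] show ?thesis by simp
qed

end

definition Jr :: "nat \<Rightarrow> nat \<Rightarrow> complex poly \<Rightarrow> complex" where
  "Jr N M p = (LINT x:{0<..}|lborel. poly p (complex_of_real x) * rho N M x)"

context
  fixes N M :: nat
  assumes MN: "M > N"
begin

lemma Jr_add: "Jr N M (p1 + p2) = Jr N M p1 + Jr N M p2"
proof -
  have "Jr N M (p1 + p2) = (LINT x:{0<..}|lborel. poly p1 (complex_of_real x) * rho N M x + poly p2 (complex_of_real x) * rho N M x)"
    unfolding Jr_def by (rule set_lebesgue_integral_cong) (auto simp: algebra_simps)
  also have "\<dots> = Jr N M p1 + Jr N M p2" unfolding Jr_def
    by (rule set_integral_add(2)[OF int_rho[OF MN] int_rho[OF MN]])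
  finally show ?thesis .
qed

lemma Jr_smult: "Jr N M (smult c p) = c * Jr N M p"
proof -
  have "Jr N M (smult c p) = (LINT x:{0<..}|lborel. c * (poly p (complex_of_real x) * rho N M x))"
    unfolding Jr_def by (rule set_lebesgue_integral_cong) (auto simp: algebra_simps)
  thus ?thesis unfolding Jr_def by simp
qed

lemma Jr_0: "Jr N M 0 = 0" unfolding Jr_def by simp

lemma Jr_sum: "finite S \<Longrightarrow> Jr N M (q * (\<Sum>i\<in>S. f i)) = (\<Sum>i\<in>S. Jr N M (q * f i))"
  by (induction S rule: finite_induct) (simp_all add: Jr_0 Jr_add distrib_left)

lemma Jr_zero_poly:
  assumes "Jr N M (q * q') = 0" "q' = map_poly cnj q"
  shows "q = 0"
proof (rule ccontr)
  assume q0: "q \<noteq> 0"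
  define h where "h = (\<lambda>x::real. (norm (poly q (complex_of_real x)))\<^sup>2 * (x ^ (M - N) * exp (- real M * x)))"
  have pq: "poly (q * q') (complex_of_real x) * rho N M x = complex_of_real (h x)" for x
  proof -
    have "poly q' (complex_of_real x) = cnj (poly q (complex_of_real x))" using assms(2) by simp
    hence "poly (q * q') (complex_of_real x) = poly q (complex_of_real x) * cnj (poly q (complex_of_real x))"
      by simp
    also have "\<dots> = complex_of_real ((norm (poly q (complex_of_real x)))\<^sup>2)"
      by (rule complex_norm_square[symmetric])
    finally have "poly (q * q') (complex_of_real x) = complex_of_real ((norm (poly q (complex_of_real x)))\<^sup>2)" .
    thus ?thesis unfolding h_def rho_def by simp
  qed
  have ci: "set_integrable lborel {0<..} (\<lambda>x. complex_of_real (h x))"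
    using int_rho[OF MN, of "q * q'"] unfolding pq .
  have hi: "set_integrable lborel {0<..} h"
  proof (rule set_integrable_bound[OF ci])
    show "set_borel_measurable lborel {0<..} h" unfolding set_borel_measurable_def h_def
      using poly_meas by measurable
    show "AE x in lborel. x \<in> {0<..} \<longrightarrow> norm (h x) \<le> norm (complex_of_real (h x))" by simp
  qed
  have h0: "(LINT x:{0<..}|lborel. h x) = 0"
  proof -
    have "complex_of_real (LINT x:{0<..}|lborel. h x) = (LINT x:{0<..}|lborel. complex_of_real (h x))"
      by (rule set_integral_complex_of_real[symmetric])
    also have "\<dots> = Jr N M (q * q')" unfolding Jr_def pq ..
    finally show ?thesis using assms(1) by simp
  qed
  have hnn: "h x \<ge> 0" if "x \<ge> 0" for x using that unfolding h_def by simp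
  have hi12: "set_integrable lborel {1..2} h" by (rule set_integrable_subset[OF hi]) auto
  have "(LINT x:{1..2}|lborel. h x) \<le> (LINT x:{0<..}|lborel. h x)"
  proof -
    have "(LINT x:{1..2}|lborel. h x) = (LINT x:{0<..}|lborel. indicator {1..2} x * h x)"
      unfolding set_lebesgue_integral_def
      by (rule Bochner_Integration.integral_cong) (auto split: split_indicator)
    also have "\<dots> \<le> (LINT x:{0<..}|lborel. h x)"
    proof (rule set_integral_mono)
      show "set_integrable lborel {0<..} (\<lambda>x. indicator {1..2} x * h x)"
      proof -
        have "(\<lambda>x. indicator {0<..} x *\<^sub>R (indicator {1..2} x * h x)) = (\<lambda>x. indicator {1..2} x *\<^sub>R h x)"
          by (auto simp: fun_eq_iff split: split_indicator)
        thus ?thesis using hi12 unfolding set_integrable_def by simp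
      qed
      show "set_integrable lborel {0<..} h" by (rule hi)
      fix x :: real assume "x \<in> {0<..}"
      thus "indicator {1..2} x * h x \<le> h x" using hnn[of x] by (auto split: split_indicator)
    qed
    finally show ?thesis .
  qed
  moreover have "(LINT x:{1..2}|lborel. h x) \<ge> 0"
    unfolding set_lebesgue_integral_def
    by (rule Bochner_Integration.integral_nonneg) (auto intro: hnn split: split_indicator)
  ultimately have "(LINT x:{1..2}|lborel. h x) = 0" using h0 by simp
  hence "integral {1..2} h = 0" using set_borel_integral_eq_integral(2)[OF hi12] by simp
  hence hI: "(h has_integral 0) (cbox 1 2)"
    using set_borel_integral_eq_integral(1)[OF hi12] by (simp add: has_integral_iff)
  have hc: "continuous_on (cbox 1 2) h" unfolding h_def by (intro continuous_intros)
  have z: "h x = 0" if "x \<in> {1..2}" for x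
    by (rule has_integral_0_cbox_imp_0[OF hc _ hI]) (use that hnn in auto)
  have "complex_of_real ` {1..2} \<subseteq> {z. poly q z = 0}"
  proof
    fix z assume "z \<in> complex_of_real ` {1..2}"
    then obtain x where x: "x \<in> {1..2}" "z = complex_of_real x" by blast
    have Bp: "x ^ (M - N) * exp (- real M * x) > 0" using x by simp
    have prod: "(norm (poly q (complex_of_real x)))\<^sup>2 * (x ^ (M - N) * exp (- real M * x)) = 0"
      using z[OF x(1)] unfolding h_def .
    have "(norm (poly q (complex_of_real x)))\<^sup>2 = ((norm (poly q (complex_of_real x)))\<^sup>2 * (x ^ (M - N) * exp (- real M * x))) / (x ^ (M - N) * exp (- real M * x))"
      using Bp by (intro nonzero_mult_div_cancel_right[symmetric]) (rule less_imp_neq[symmetric])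
    also have "\<dots> = 0" by (subst prod) simp
    finally have "(norm (poly q (complex_of_real x)))\<^sup>2 = 0" .
    thus "z \<in> {z. poly q z = 0}" using x by simp
  qed
  moreover have "infinite (complex_of_real ` {1..2})"
    using infinite_Icc[of "1::real" 2] by (simp add: finite_image_iff inj_on_def)
  ultimately have "infinite {z. poly q z = 0}" using finite_subset by blast
  thus False using poly_roots_finite[OF q0] by simp
qed

end

lemma analytic_core:
  assumes "N > 0" "M > N" "even N" "skew_orth N M t N pN" "skew_orth N M t (N+1) pN1"
    "Dop N M t q = smult a pN1 + smult b pN"
  shows "q = 0"
proof -
  have MN: "M > N" by (rule assms(2))
  have M0: "M > 0" using MN by simp
  have e1: "2 * (N div 2) = N" using assms(3) by simp
  have e2: "2 * ((N + 1) div 2) = N" using assms(3) by simp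
  have dN: "degree pN = N" and dN1: "degree pN1 = N + 1"
    using assms(4,5) unfolding skew_orth_def by auto
  have oN: "skew1 N M t pN (monom 1 i) = 0" if "i < N" for i
    using assms(4) that e1 unfolding skew_orth_def by auto
  have oN1: "skew1 N M t pN1 (monom 1 i) = 0" if "i < N" for i
    using assms(5) that e2 unfolding skew_orth_def by auto
  have J0: "Jr N M (q * monom 1 i) = 0" if "i < N" for i
  proof -
    have "skew1 N M t (Dop N M t q) (monom 1 i) = a * skew1 N M t pN1 (monom 1 i) + b * skew1 N M t pN (monom 1 i)"
      unfolding assms(6) skew_add[OF MN] skew_smult[OF MN] ..
    also have "\<dots> = 0" using oN oN1 that by simp
    finally show ?thesis using ibp[OF MN, where t=t and q=q and g="monom 1 i"] unfolding Jr_def by simp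
  qed
  show "q = 0"
  proof (rule ccontr)
    assume q0: "q \<noteq> 0"
    have "degree (Dop N M t q) = degree q + 2" using Dop_degree[OF M0 q0] by simp
    moreover have "degree (smult a pN1 + smult b pN) \<le> N + 1"
    proof (rule degree_add_le)
      show "degree (smult a pN1) \<le> N + 1" using dN1 degree_smult_le[of a pN1] by simp
      show "degree (smult b pN) \<le> N + 1" using dN degree_smult_le[of b pN] by simp
    qed
    ultimately have dq: "degree q < N" using assms(6) by simp
    define q' where "q' = map_poly cnj q"
    have dq': "degree q' = degree q" unfolding q'_def by (rule degree_map_poly) simp
    have "Jr N M (q * q') = Jr N M (q * (\<Sum>i\<le>degree q'. monom (coeff q' i) i))"
      by (simp only: poly_as_sum_of_monoms)
    also have "\<dots> = (\<Sum>i\<le>degree q'. Jr N M (q * monom (coeff q' i) i))"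
      by (rule Jr_sum[OF MN]) simp
    also have "\<dots> = 0"
    proof (rule sum.neutral, rule ballI)
      fix i assume "i \<in> {..degree q'}"
      hence i: "i < N" using dq dq' by simp
      have "monom (coeff q' i) i = smult (coeff q' i) (monom 1 i)" by (simp add: smult_monom)
      hence "q * monom (coeff q' i) i = smult (coeff q' i) (q * monom 1 i)"
        by (simp add: mult_smult_right)
      thus "Jr N M (q * monom (coeff q' i) i) = 0" using Jr_smult[OF MN] J0[OF i] by simp
    qed
    finally have "Jr N M (q * q') = 0" .
    from Jr_zero_poly[OF MN this q'_def] q0 show False by simp
  qed
qed

theorem lemma3:
  fixes N M :: nat and t :: complex and pN pN1 :: "complex poly"
  assumes "N > 0" and "M > N" and "even N"
    and "skew_orth N M t N pN"
    and "skew_orth N M t (N + 1) pN1"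
  shows "bij_betw (fmap N M t)
           {smult a pN1 + smult b pN | a b. True}
           {R :: complex poly. degree R \<le> 1}"
proof -
  have M0: "M > 0" using assms by simp
  have dN: "degree pN = N" "lead_coeff pN = 1" and dN1: "degree pN1 = N + 1" "lead_coeff pN1 = 1"
    using assms(4,5) unfolding skew_orth_def by auto
  define r1 where "r1 = fmap N M t pN1"
  define r2 where "r2 = fmap N M t pN"
  obtain q1 where q1: "pN1 = Dop N M t q1 + r1" "degree r1 \<le> 1"
    using fmap_spec[OF M0, of pN1 N t] unfolding r1_def by blast
  obtain q2 where q2: "pN = Dop N M t q2 + r2" "degree r2 \<le> 1"
    using fmap_spec[OF M0, of pN N t] unfolding r2_def by blast
  have lin: "fmap N M t (smult a pN1 + smult b pN) = smult a r1 + smult b r2" for a b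
  proof (rule fmap_eq[OF M0])
    show "degree (smult a r1 + smult b r2) \<le> 1"
      using q1(2) q2(2) by (meson degree_add_le degree_smult_le order_trans)
    show "smult a pN1 + smult b pN = Dop N M t (smult a q1 + smult b q2) + (smult a r1 + smult b r2)"
      by (subst q1(1), subst q2(1)) (simp add: Dop_add Dop_smult smult_add_right algebra_simps)
  qed
  have inj0: "a = 0 \<and> b = 0" if h: "smult a r1 + smult b r2 = 0" for a b
  proof -
    have "smult a pN1 + smult b pN = Dop N M t (smult a q1 + smult b q2) + (smult a r1 + smult b r2)"
      by (subst q1(1), subst q2(1)) (simp add: Dop_add Dop_smult smult_add_right algebra_simps)
    hence e: "Dop N M t (smult a q1 + smult b q2) = smult a pN1 + smult b pN" using h by simp
    have "smult a q1 + smult b q2 = 0" by (rule analytic_core[OF assms e])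
    hence z: "smult a pN1 + smult b pN = 0" using e by (simp add: Dop_0)
    have "coeff (smult a pN1 + smult b pN) (N+1) = a" using dN dN1 by (simp add: coeff_eq_0)
    hence a0: "a = 0" using z by simp
    have "coeff (smult a pN1 + smult b pN) N = b" using dN a0 by simp
    hence "b = 0" using z by simp
    thus ?thesis using a0 by simp
  qed
  define u0 where "u0 = coeff r1 0"
  define u1 where "u1 = coeff r1 1"
  define v0 where "v0 = coeff r2 0"
  define v1 where "v1 = coeff r2 1"
  have r1e: "r1 = [:u0, u1:]" using deg1_pCons[OF q1(2)] u0_def u1_def by simp
  have r2e: "r2 = [:v0, v1:]" using deg1_pCons[OF q2(2)] v0_def v1_def by simp
  have inj0': "a = 0 \<and> b = 0" if "a * u0 + b * v0 = 0" "a * u1 + b * v1 = 0" for a b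
    using inj0[of a b] that unfolding r1e r2e by simp
  have det: "u0 * v1 - u1 * v0 \<noteq> 0"
  proof
    assume d0: "u0 * v1 - u1 * v0 = 0"
    show False
    proof (cases "v1 = 0 \<and> u1 = 0")
      case False
      have "v1 = 0 \<and> - u1 = 0" by (rule inj0') (use d0 in \<open>auto simp: algebra_simps\<close>)
      thus False using False by simp
    next
      case True
      have "v0 = 0 \<and> - u0 = 0" by (rule inj0') (use True in \<open>auto simp: algebra_simps\<close>)
      hence "(1::complex) = 0 \<and> (0::complex) = 0" by (intro inj0') (use True in auto)
      thus False by simp
    qed
  qed
  show ?thesis
    unfolding bij_betw_def
  proof (intro conjI)
    show "inj_on (fmap N M t) {smult a pN1 + smult b pN |a b. True}"
    proof (rule inj_onI)
      fix x y assume "x \<in> {smult a pN1 + smult b pN |a b. True}" "y \<in> {smult a pN1 + smult b pN |a b. True}"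
        and eq: "fmap N M t x = fmap N M t y"
      then obtain a b a' b' where xy: "x = smult a pN1 + smult b pN" "y = smult a' pN1 + smult b' pN" by blast
      have "smult (a - a') r1 + smult (b - b') r2 = 0"
        using eq unfolding xy lin by (simp add: algebra_simps smult_diff_left)
      hence "a - a' = 0 \<and> b - b' = 0" by (rule inj0)
      thus "x = y" unfolding xy by simp
    qed
    show "fmap N M t ` {smult a pN1 + smult b pN |a b. True} = {R. degree R \<le> 1}"
    proof (intro equalityI subsetI)
      fix R assume "R \<in> fmap N M t ` {smult a pN1 + smult b pN |a b. True}"
      then obtain a b where "R = fmap N M t (smult a pN1 + smult b pN)" by blast
      thus "R \<in> {R. degree R \<le> 1}" unfolding lin
        using q1(2) q2(2) by (simp, meson degree_add_le degree_smult_le order_trans)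
    next
      fix R assume "R \<in> {R :: complex poly. degree R \<le> 1}"
      hence Re: "R = [:coeff R 0, coeff R 1:]" using deg1_pCons by simp
      define c0 where "c0 = coeff R 0"
      define c1 where "c1 = coeff R 1"
      define dd where "dd = u0 * v1 - u1 * v0"
      define a where "a = (c0 * v1 - c1 * v0) / dd"
      define b where "b = (u0 * c1 - u1 * c0) / dd"
      have ddn: "dd \<noteq> 0" using det dd_def by simp
      have e1: "a * u0 + b * v0 = c0"
      proof -
        have "a * u0 + b * v0 = ((c0 * v1 - c1 * v0) * u0 + (u0 * c1 - u1 * c0) * v0) / dd"
          by (simp add: a_def b_def add_divide_distrib)
        also have "\<dots> = c0 * dd / dd" by (simp add: dd_def algebra_simps)
        finally show ?thesis using ddn by simp
      qed
      have e2: "a * u1 + b * v1 = c1"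
      proof -
        have "a * u1 + b * v1 = ((c0 * v1 - c1 * v0) * u1 + (u0 * c1 - u1 * c0) * v1) / dd"
          by (simp add: a_def b_def add_divide_distrib)
        also have "\<dots> = c1 * dd / dd" by (simp add: dd_def algebra_simps)
        finally show ?thesis using ddn by simp
      qed
      note e1 e2
      hence "fmap N M t (smult a pN1 + smult b pN) = R"
        unfolding lin r1e r2e by (subst Re) (simp add: c0_def c1_def algebra_simps)
      thus "R \<in> fmap N M t ` {smult a pN1 + smult b pN |a b. True}" by blast
    qed
  qed
qed

end
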